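(* Consider the system $\frac{d\boldsymbol{x}}{dt}=\mathbf{A}\boldsymbol{x}+\mathbf{B}_p\boldsymbol{p}+\mathbf{B}_d\boldsymbol{d}$ on $\mathcal{T}=[0,t_f]$, with $\boldsymbol{x}\in\mathbb{R}^{N_x}$, $\boldsymbol{p}\in\mathbb{R}^{N_p}_+$, $\mathbf{A}$ having non-positive diagonal and non-negative off-diagonal entries, $\mathbf{B}_p\ge 0$ entrywise, given $\boldsymbol{d}$ and $\boldsymbol{x}_0$, power bounds $\boldsymbol{0}\le\boldsymbol{p}_{\min}\le\boldsymbol{p}_{\max}$ and state bounds $\boldsymbol{x}_{\min}\le\boldsymbol{x}_{\max}$. Let $\boldsymbol{\delta}:\mathcal{T}\to\mathbb{R}^{N_p}$ be a fixed dispatch plan with $\delta_j(t)\ge0$ and $\sum_{j}\delta_j(t)=1$ for all $t$; a total power trajectory $p_{\mathrm{tot}}\ge 0$ is dispatched as $p_j(t)=\delta_j(t)p_{\mathrm{tot}}(t)$. Define for $i=1,\dots,N_x$ $$\gamma_{+,i}(t)=\max_{0\le\tau\le t}\sum_{j}\big(e^{\mathbf{A}(t-\tau)}\mathbf{B}_p\big)_{i,j}\delta_j(\tau),\qquad \gamma_{-,i}(t)=\min_{0\le\tau\le t}\sum_{j}\big(e^{\mathbf{A}(t-\tau)}\mathbf{B}_p\big)_{i,j}\delta_j(\tau),$$ and assume $\gamma_{\pm,i}(t)>0$ for all $i$ and $t\in\mathcal{T}$. Let $\boldsymbol{p}_+$ and $\boldsymbol{p}_-$ be feasible power trajectories dispatched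 according to $\boldsymbol{\delta}$ (i.e. $\boldsymbol{p}_\pm=\boldsymbol{\delta}p_{\pm,\mathrm{tot}}$ with $p_{\pm,\mathrm{tot}}\ge 0$, satisfying the power bounds and, with the same $\boldsymbol{x}_0,\boldsymbol{d}$, the state bounds for all $t$), and define $$\mathrm{E}^{\mathrm{TI,c}}_{\mathrm{up}}(t)=\min_{i}\frac{1}{\gamma_{+,i}(t)}\Big(\int_0^t e^{\mathbf{A}(t-\tau)}\mathbf{B}_p\boldsymbol{p}_+(\tau)\,d\tau\Big)_i,\qquad \mathrm{E}^{\mathrm{TI,c}}_{\mathrm{down}}(t)=\max_{i}\frac{1}{\gamma_{-,i}(t)}\Big(\int_0^t e^{\mathbf{A}(t-\tau)}\mathbf{B}_p\boldsymbol{p}_-(\tau)\,d\tau\Big)_i.$$ If a total power trajectory $p_{a,\mathrm{tot}}\ge0$, dispatched as $\boldsymbol{p}_a=\boldsymbol{\delta}p_{a,\mathrm{tot}}$, satisfies $\boldsymbol{p}_{\min}\le\boldsymbol{p}_a(t)\le\boldsymbol{p}_{\max}$ and $\mathrm{E}^{\mathrm{TI,c}}_{\mathrm{down}}(t)\le\int_0^t p_{a,\mathrm{tot}}(\tau)\,d\tau\le\mathrm{E}^{\mathrm{TI,c}}_{\mathrm{up}}(t)$ for all $t\in\mathcal{T}$, then the resulting state $\boldsymbol{x}_a$ (same $\boldsymbol{x}_0,\boldsymbol{d}$) satisfies $\boldsymbol{x}_{\min}\le\boldsymbol{x}_a(t)\le\boldsymbol{x}_{\max}$ for all $t\in\ma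thcal{T}$.
   Context: Vector inequalities and integrals are componentwise. States are given by $\boldsymbol{x}(t)=e^{\mathbf{A}t}\boldsymbol{x}_0+\int_0^t e^{\mathbf{A}(t-\tau)}(\mathbf{B}_d\boldsymbol{d}(\tau)+\mathbf{B}_p\boldsymbol{p}(\tau))\,d\tau$. This is the "centralized" setting in which all inputs are managed as one pool receiving a total power request $p_{\mathrm{tot}}$. *)

theory Defs
  imports "HOL-Analysis.Analysis"
begin

definition mat_pow :: "real^'n^'n \<Rightarrow> nat \<Rightarrow> real^'n^'n" where
  "mat_pow M k = (((**) M) ^^ k) (mat 1)"

definition mexp :: "real^'n^'n \<Rightarrow> real^'n^'n" where
  "mexp M = (\<Sum>k. (1 / fact k) *\<^sub>R mat_pow M k)"

definition state ::
  "real^'n^'n \<Rightarrow> real^'k^'n \<Rightarrow> real^'m^'n \<Rightarrow> real^'n \<Rightarrow> (real \<Rightarrow> real^'k)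
     \<Rightarrow> (real \<Rightarrow> real^'m) \<Rightarrow> real \<Rightarrow> real^'n" where
  "state A Bd Bp x0 d p t =
     mexp (t *\<^sub>R A) *v x0
     + integral {0..t} (\<lambda>\<tau>. mexp ((t - \<tau>) *\<^sub>R A) *v (Bd *v d \<tau> + Bp *v p \<tau>))"

definition dispatch :: "(real \<Rightarrow> real^'m) \<Rightarrow> (real \<Rightarrow> real) \<Rightarrow> real \<Rightarrow> real^'m" where
  "dispatch \<delta> ptot t = ptot t *\<^sub>R \<delta> t"

definition gamma_plus ::
  "real^'n^'n \<Rightarrow> real^'m^'n \<Rightarrow> (real \<Rightarrow> real^'m) \<Rightarrow> real \<Rightarrow> 'n \<Rightarrow> real" where
  "gamma_plus A Bp \<delta> t i =
     (SUP \<tau>\<in>{0..t}. \<Sum>j\<in>UNIV. (mexp ((t - \<tau>) *\<^sub>R A) ** Bp) $ i $ j * \<delta> \<tau> $ j)"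

definition gamma_minus ::
  "real^'n^'n \<Rightarrow> real^'m^'n \<Rightarrow> (real \<Rightarrow> real^'m) \<Rightarrow> real \<Rightarrow> 'n \<Rightarrow> real" where
  "gamma_minus A Bp \<delta> t i =
     (INF \<tau>\<in>{0..t}. \<Sum>j\<in>UNIV. (mexp ((t - \<tau>) *\<^sub>R A) ** Bp) $ i $ j * \<delta> \<tau> $ j)"

definition forced :: "real^'n^'n \<Rightarrow> real^'m^'n \<Rightarrow> (real \<Rightarrow> real^'m) \<Rightarrow> real \<Rightarrow> real^'n" where
  "forced A Bp p t = integral {0..t} (\<lambda>\<tau>. mexp ((t - \<tau>) *\<^sub>R A) *v (Bp *v p \<tau>))"

definition E_up ::
  "real^'n^'n \<Rightarrow> real^'m^'n \<Rightarrow> (real \<Rightarrow> real^'m) \<Rightarrow> (real \<Rightarrow> real^'m) \<Rightarrow> real \<Rightarrow> real" where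
  "E_up A Bp \<delta> pplus t =
     Min (range (\<lambda>i::'n. forced A Bp pplus t $ i / gamma_plus A Bp \<delta> t i))"

definition E_down ::
  "real^'n^'n \<Rightarrow> real^'m^'n \<Rightarrow> (real \<Rightarrow> real^'m) \<Rightarrow> (real \<Rightarrow> real^'m) \<Rightarrow> real \<Rightarrow> real" where
  "E_down A Bp \<delta> pminus t =
     Max (range (\<lambda>i::'n. forced A Bp pminus t $ i / gamma_minus A Bp \<delta> t i))"

definition feasible_tot ::
  "real^'n^'n \<Rightarrow> real^'k^'n \<Rightarrow> real^'m^'n \<Rightarrow> real^'n \<Rightarrow> (real \<Rightarrow> real^'k)
   \<Rightarrow> real^'m \<Rightarrow> real^'m \<Rightarrow> real^'n \<Rightarrow> real^'n \<Rightarrow> real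
   \<Rightarrow> (real \<Rightarrow> real^'m) \<Rightarrow> (real \<Rightarrow> real) \<Rightarrow> bool" where
  "feasible_tot A Bd Bp x0 d pmin pmax xmin xmax tf \<delta> ptot \<longleftrightarrow>
     ptot integrable_on {0..tf} \<and>
     (\<forall>t\<in>{0..tf}. 0 \<le> ptot t) \<and>
     (\<forall>t\<in>{0..tf}. \<forall>j. pmin $ j \<le> dispatch \<delta> ptot t $ j \<and> dispatch \<delta> ptot t $ j \<le> pmax $ j) \<and>
     (\<forall>t\<in>{0..tf}. \<forall>i. xmin $ i \<le> state A Bd Bp x0 d (dispatch \<delta> ptot) t $ i
                      \<and> state A Bd Bp x0 d (dispatch \<delta> ptot) t $ i \<le> xmax $ i)"

end

theory Submission
  imports Defs
begin

lemma mat_pow_Suc: "mat_pow M (Suc k) = M ** mat_pow M k"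
  by (simp add: mat_pow_def)
lemma mat_pow_0: "mat_pow M 0 = mat 1"
  by (simp add: mat_pow_def)

lemma scaleR_mmult: "(s *\<^sub>R M) ** (P::real^'n^'n) = s *\<^sub>R (M ** P)"
  by (simp add: matrix_matrix_mult_def vec_eq_iff sum_distrib_left mult.assoc)
lemma mmult_scaleR: "(M::real^'n^'n) ** (s *\<^sub>R P) = s *\<^sub>R (M ** P)"
  by (simp add: matrix_matrix_mult_def vec_eq_iff sum_distrib_left mult.assoc mult.left_commute)

lemma mat_pow_scaleR: "mat_pow (s *\<^sub>R M) k = (s ^ k) *\<^sub>R mat_pow M k"
  by (induction k) (simp_all add: mat_pow_0 mat_pow_Suc scaleR_mmult mmult_scaleR)

lemma mat_pow_bound:
  fixes M :: "real^'n^'n"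
  defines "c \<equiv> (\<Sum>i\<in>UNIV. \<Sum>j\<in>UNIV. \<bar>M $ i $ j\<bar>)"
  shows "\<bar>mat_pow M k $ i $ j\<bar> \<le> c ^ k"
proof (induction k arbitrary: i j)
  case 0 then show ?case by (simp add: mat_pow_0 mat_def)
next
  case (Suc k)
  have c0: "0 \<le> c" unfolding c_def by (intro sum_nonneg) auto
  have "\<bar>mat_pow M (Suc k) $ i $ j\<bar> = \<bar>\<Sum>l\<in>UNIV. M $ i $ l * mat_pow M k $ l $ j\<bar>"
    by (simp add: mat_pow_Suc matrix_matrix_mult_def)
  also have "\<dots> \<le> (\<Sum>l\<in>UNIV. \<bar>M $ i $ l\<bar> * c ^ k)"
    by (rule order_trans[OF sum_abs], rule sum_mono) (simp add: abs_mult mult_left_mono Suc.IH)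
  also have "\<dots> = (\<Sum>l\<in>UNIV. \<bar>M $ i $ l\<bar>) * c ^ k" by (simp add: sum_distrib_right)
  also have "\<dots> \<le> c * c ^ k"
  proof (rule mult_right_mono)
    show "(\<Sum>l\<in>UNIV. \<bar>M $ i $ l\<bar>) \<le> c" unfolding c_def
      by (rule member_le_sum[where f="\<lambda>i. \<Sum>l\<in>UNIV. \<bar>M $ i $ l\<bar>"]) (auto intro: sum_nonneg)
  qed (simp add: c0)
  finally show ?case by simp
qed

lemma norm_mat_le: "norm (X :: real^'n^'n) \<le> (\<Sum>i\<in>UNIV. \<Sum>j\<in>UNIV. \<bar>X $ i $ j\<bar>)"
proof -
  have "norm X \<le> (\<Sum>i\<in>UNIV. norm (X $ i))" unfolding norm_vec_def by (rule L2_set_le_sum) simp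
  also have "\<dots> \<le> (\<Sum>i\<in>UNIV. \<Sum>j\<in>UNIV. \<bar>X $ i $ j\<bar>)" by (intro sum_mono norm_le_l1_cart)
  finally show ?thesis .
qed

lemma mexp_summable:
  fixes M :: "real^'n^'n"
  shows "summable (\<lambda>k. (1 / fact k) *\<^sub>R mat_pow M k)"
proof -
  define c where "c = (\<Sum>i\<in>UNIV. \<Sum>j\<in>UNIV. \<bar>M $ i $ j\<bar>)"
  have "norm ((1 / fact k) *\<^sub>R mat_pow M k) \<le> real (CARD('n) * CARD('n)) * (inverse (fact k) * c ^ k)" for k
  proof -
    have "norm ((1 / fact k) *\<^sub>R mat_pow M k) = norm (mat_pow M k) / fact k" by simp
    also have "\<dots> \<le> (\<Sum>i\<in>(UNIV::'n set). \<Sum>j\<in>(UNIV::'n set). c ^ k) / fact k"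
      by (intro divide_right_mono order_trans[OF norm_mat_le] sum_mono) (auto simp: c_def mat_pow_bound)
    finally show ?thesis by (simp add: field_simps)
  qed
  moreover have "summable (\<lambda>k. real (CARD('n) * CARD('n)) * (inverse (fact k) * c ^ k))"
    by (intro summable_mult summable_exp)
  ultimately show ?thesis by (rule summable_comparison_test'[rotated]) 
qed

lemma bl_entry: "bounded_linear (\<lambda>X::real^'n^'m. X $ i $ j)"
  by (rule bounded_linear_compose[of "\<lambda>x. x $ j"]) (rule bounded_linear_vec_nth)+

lemma mexp_entry:
  fixes M :: "real^'n^'n"
  shows "mexp (s *\<^sub>R M) $ i $ j = (\<Sum>k. (mat_pow M k $ i $ j / fact k) * s ^ k)"
proof -
  have "mexp (s *\<^sub>R M) $ i $ j = (\<Sum>k. ((1 / fact k) *\<^sub>R mat_pow (s *\<^sub>R M) k) $ i $ j)"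
    unfolding mexp_def by (rule bounded_linear.suminf[OF bl_entry mexp_summable])
  then show ?thesis by (simp add: mat_pow_scaleR mult.commute)
qed

lemma isCont_mexp_entry:
  fixes M :: "real^'n^'n"
  shows "isCont (\<lambda>s. mexp (s *\<^sub>R M) $ i $ j) x"
proof -
  define c where "c = (\<Sum>i\<in>UNIV. \<Sum>j\<in>UNIV. \<bar>M $ i $ j\<bar>)"
  define K where "K = \<bar>x\<bar> + 1"
  have K0: "0 \<le> K" by (simp add: K_def)
  have "summable (\<lambda>k. (mat_pow M k $ i $ j / fact k) * K ^ k)"
  proof (rule summable_comparison_test'[OF summable_exp[of "c * K"]])
    fix k
    have "norm ((mat_pow M k $ i $ j / fact k) * K ^ k) = \<bar>mat_pow M k $ i $ j\<bar> * K ^ k / fact k"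
      using K0 by (simp add: abs_mult)
    also have "\<dots> \<le> c ^ k * K ^ k / fact k"
      by (intro divide_right_mono mult_right_mono) (auto simp: c_def mat_pow_bound K0)
    finally show "norm ((mat_pow M k $ i $ j / fact k) * K ^ k) \<le> inverse (fact k) * (c * K) ^ k"
      by (simp add: field_simps power_mult_distrib)
  qed
  then have "isCont (\<lambda>s. \<Sum>k. (mat_pow M k $ i $ j / fact k) * s ^ k) x"
    by (rule isCont_powser) (simp add: K_def)
  then show ?thesis by (simp add: mexp_entry)
qed

lemma continuous_on_mexp_entry:
  fixes M :: "real^'n^'n"
  shows "continuous_on S (\<lambda>\<tau>. mexp ((t - \<tau>) *\<^sub>R M) $ i $ j)"
proof -
  have "continuous_on S ((\<lambda>s. mexp (s *\<^sub>R M) $ i $ j) \<circ> (\<lambda>\<tau>. t - \<tau>))"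
    proof (rule continuous_on_compose)
    show "continuous_on S (\<lambda>\<tau>. t - \<tau>)" by (intro continuous_intros)
    show "continuous_on ((\<lambda>\<tau>. t - \<tau>) ` S) (\<lambda>s. mexp (s *\<^sub>R M) $ i $ j)"
      by (rule continuous_at_imp_continuous_on) (simp add: isCont_mexp_entry)
  qed
  then show ?thesis by (simp add: o_def)
qed

lemma continuous_on_mexp:
  fixes M :: "real^'n^'n"
  shows "continuous_on S (\<lambda>\<tau>. mexp ((t - \<tau>) *\<^sub>R M))"
proof -
  have "continuous_on S (\<lambda>\<tau>. \<chi> i. \<chi> j. mexp ((t - \<tau>) *\<^sub>R M) $ i $ j)"
    by (intro continuous_on_vec_lambda continuous_on_mexp_entry)
  then show ?thesis by simp
qed

lemma bilinear_mv: "bilinear (\<lambda>(X::real^'m^'n) (v::real^'m). X *v v)"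
  unfolding bilinear_def
  by (auto simp: linear_iff matrix_vector_mult_add_rdistrib matrix_vector_right_distrib
      scaleR_matrix_vector_assoc matrix_vector_mult_scaleR)

lemma bilinear_sR: "bilinear (\<lambda>(v::real^'m) (c::real). c *\<^sub>R v)"
  unfolding bilinear_def
  by (auto simp: linear_iff algebra_simps)


lemma mv_absint:
  fixes F :: "real \<Rightarrow> real^'m^'n" and w :: "real \<Rightarrow> real^'m"
  assumes F: "continuous_on {a..b} F" and w: "w absolutely_integrable_on {a..b}"
  shows "(\<lambda>\<tau>. F \<tau> *v w \<tau>) absolutely_integrable_on {a..b}"
proof -
  have "(\<lambda>\<tau>. (\<lambda>X v. X *v v) (F \<tau>) (w \<tau>)) absolutely_integrable_on {a..b}"
  proof (rule absolutely_integrable_bounded_measurable_product[OF bilinear_mv])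
    show "F \<in> borel_measurable (lebesgue_on {a..b})"
      by (rule continuous_imp_measurable_on_sets_lebesgue[OF F]) simp
    show "bounded (F ` {a..b})"
      by (rule compact_imp_bounded, rule compact_continuous_image[OF F]) simp
  qed (use w in auto)
  then show ?thesis by simp
qed

lemma disp_absint:
  fixes \<delta> :: "real \<Rightarrow> real^'m" and p :: "real \<Rightarrow> real"
  assumes dm: "\<delta> measurable_on {0..tf}" and dn: "\<forall>t\<in>{0..tf}. \<forall>j. 0 \<le> \<delta> t $ j"
    and ds: "\<forall>t\<in>{0..tf}. (\<Sum>j\<in>UNIV. \<delta> t $ j) = 1"
    and p: "p integrable_on {0..tf}" and pn: "\<forall>t\<in>{0..tf}. 0 \<le> p t"
    and t: "t \<in> {0..tf}"
  shows "dispatch \<delta> p absolutely_integrable_on {0..t}"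
proof -
  have sub: "{0..t} \<subseteq> {0..tf}" using t by auto
  have "\<delta> \<in> borel_measurable (lebesgue_on {0..tf})"
    using dm by (simp add: measurable_on_iff_borel_measurable)
  then have dm': "\<delta> \<in> borel_measurable (lebesgue_on {0..t})"
    by (rule measurable_restrict_mono[OF _ sub])
  have "bounded (\<delta> ` {0..t})"
  proof (rule boundedI)
    fix y assume "y \<in> \<delta> ` {0..t}"
    then obtain \<tau> where \<tau>: "\<tau> \<in> {0..tf}" "y = \<delta> \<tau>" using sub by force
    have "norm y \<le> (\<Sum>j\<in>UNIV. \<bar>y $ j\<bar>)" by (rule norm_le_l1_cart)
    also have "\<dots> = (\<Sum>j\<in>UNIV. \<delta> \<tau> $ j)" using \<tau> dn by simp
    also have "\<dots> = 1" using \<tau> ds by simp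
    finally show "norm y \<le> 1" .
  qed
  moreover have "p absolutely_integrable_on {0..t}"
    using sub p pn by (intro nonnegative_absolutely_integrable_1 integrable_on_subinterval[OF p]) auto
  ultimately have "(\<lambda>\<tau>. (\<lambda>v c. c *\<^sub>R v) (\<delta> \<tau>) (p \<tau>)) absolutely_integrable_on {0..t}"
    using dm' by (intro absolutely_integrable_bounded_measurable_product[OF bilinear_sR]) auto
  then show ?thesis by (simp add: dispatch_def[abs_def])
qed

lemma continuous_on_mexpB:
  fixes A :: "real^'n^'n" and Bp :: "real^'m^'n"
  shows "continuous_on S (\<lambda>\<tau>. mexp ((t - \<tau>) *\<^sub>R A) ** Bp)"
proof -
  have "continuous_on S (\<lambda>\<tau>. \<chi> i. \<chi> j. \<Sum>l\<in>UNIV. mexp ((t - \<tau>) *\<^sub>R A) $ i $ l * Bp $ l $ j)"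
    by (intro continuous_on_vec_lambda continuous_on_sum continuous_on_mult continuous_on_const
        continuous_on_mexp_entry)
  then show ?thesis by (simp add: matrix_matrix_mult_def)
qed

lemma state_split:
  fixes A :: "real^'n^'n" and Bp :: "real^'m^'n" and Bd :: "real^'k^'n"
  assumes d: "d absolutely_integrable_on {0..t}" and P: "P absolutely_integrable_on {0..t}"
  shows "state A Bd Bp x0 d P t = mexp (t *\<^sub>R A) *v x0
     + integral {0..t} (\<lambda>\<tau>. mexp ((t - \<tau>) *\<^sub>R A) *v (Bd *v d \<tau>)) + forced A Bp P t"
proof -
  have Bd: "(\<lambda>\<tau>. Bd *v d \<tau>) absolutely_integrable_on {0..t}"
    using absolutely_integrable_linear[OF d matrix_vector_mul_bounded_linear[of Bd]] by (simp add: o_def)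
  have BP: "(\<lambda>\<tau>. Bp *v P \<tau>) absolutely_integrable_on {0..t}"
    using absolutely_integrable_linear[OF P matrix_vector_mul_bounded_linear[of Bp]] by (simp add: o_def)
  have i1: "(\<lambda>\<tau>. mexp ((t - \<tau>) *\<^sub>R A) *v (Bd *v d \<tau>)) integrable_on {0..t}"
    using mv_absint[OF continuous_on_mexp Bd] absolutely_integrable_on_def by blast
  have i2: "(\<lambda>\<tau>. mexp ((t - \<tau>) *\<^sub>R A) *v (Bp *v P \<tau>)) integrable_on {0..t}"
    using mv_absint[OF continuous_on_mexp BP] absolutely_integrable_on_def by blast
  show ?thesis
    unfolding state_def forced_def matrix_vector_right_distrib
    by (simp add: integral_add[OF i1 i2] add.assoc)
qed

lemma forced_comp:
  fixes A :: "real^'n^'n" and Bp :: "real^'m^'n"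
  assumes P: "dispatch \<delta> p absolutely_integrable_on {0..t}"
  shows "(\<lambda>\<tau>. p \<tau> * (\<Sum>j\<in>UNIV. (mexp ((t - \<tau>) *\<^sub>R A) ** Bp) $ i $ j * \<delta> \<tau> $ j)) integrable_on {0..t}"
    and "forced A Bp (dispatch \<delta> p) t $ i
       = integral {0..t} (\<lambda>\<tau>. p \<tau> * (\<Sum>j\<in>UNIV. (mexp ((t - \<tau>) *\<^sub>R A) ** Bp) $ i $ j * \<delta> \<tau> $ j))"
proof -
  have eq: "mexp ((t - \<tau>) *\<^sub>R A) *v (Bp *v dispatch \<delta> p \<tau>)
      = (mexp ((t - \<tau>) *\<^sub>R A) ** Bp) *v dispatch \<delta> p \<tau>" for \<tau>
    by (simp add: matrix_vector_mul_assoc)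
  have ai: "(\<lambda>\<tau>. (mexp ((t - \<tau>) *\<^sub>R A) ** Bp) *v dispatch \<delta> p \<tau>) absolutely_integrable_on {0..t}"
    by (rule mv_absint[OF continuous_on_mexpB P])
  then have ii: "(\<lambda>\<tau>. (mexp ((t - \<tau>) *\<^sub>R A) ** Bp) *v dispatch \<delta> p \<tau>) integrable_on {0..t}"
    using absolutely_integrable_on_def by blast
  have ce: "((mexp ((t - \<tau>) *\<^sub>R A) ** Bp) *v dispatch \<delta> p \<tau>) $ i
      = p \<tau> * (\<Sum>j\<in>UNIV. (mexp ((t - \<tau>) *\<^sub>R A) ** Bp) $ i $ j * \<delta> \<tau> $ j)" for \<tau>
    by (simp add: matrix_vector_mult_def dispatch_def sum_distrib_left mult.left_commute)
  have "(\<lambda>\<tau>. ((mexp ((t - \<tau>) *\<^sub>R A) ** Bp) *v dispatch \<delta> p \<tau>) $ i) integrable_on {0..t}"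
    using integrable_linear[OF ii bounded_linear_vec_nth[of i]] by (simp add: o_def)
  then show "(\<lambda>\<tau>. p \<tau> * (\<Sum>j\<in>UNIV. (mexp ((t - \<tau>) *\<^sub>R A) ** Bp) $ i $ j * \<delta> \<tau> $ j)) integrable_on {0..t}"
    by (simp add: ce)
  show "forced A Bp (dispatch \<delta> p) t $ i
       = integral {0..t} (\<lambda>\<tau>. p \<tau> * (\<Sum>j\<in>UNIV. (mexp ((t - \<tau>) *\<^sub>R A) ** Bp) $ i $ j * \<delta> \<tau> $ j))"
    unfolding forced_def eq using integral_component_eq_cart[OF ii, of i] by (simp add: ce)
qed

lemma g_bounded:
  fixes A :: "real^'n^'n" and Bp :: "real^'m^'n"
  assumes dn: "\<forall>t\<in>{0..tf}. \<forall>j. 0 \<le> \<delta> t $ j"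
    and ds: "\<forall>t\<in>{0..tf}. (\<Sum>j\<in>UNIV. \<delta> t $ j) = 1"
    and t: "t \<in> {0..tf}"
  shows "\<exists>C. \<forall>\<tau>\<in>{0..t}. \<bar>\<Sum>j\<in>UNIV. (mexp ((t - \<tau>) *\<^sub>R A) ** Bp) $ i $ j * \<delta> \<tau> $ j\<bar> \<le> C"
proof -
  have "bounded ((\<lambda>\<tau>. mexp ((t - \<tau>) *\<^sub>R A) ** Bp) ` {0..t})"
    by (rule compact_imp_bounded, rule compact_continuous_image[OF continuous_on_mexpB]) simp
  then obtain C where C: "\<And>\<tau>. \<tau> \<in> {0..t} \<Longrightarrow> norm (mexp ((t - \<tau>) *\<^sub>R A) ** Bp) \<le> C"
    by (meson bounded_pos imageI)
  have "\<bar>\<Sum>j\<in>UNIV. (mexp ((t - \<tau>) *\<^sub>R A) ** Bp) $ i $ j * \<delta> \<tau> $ j\<bar> \<le> C" if \<tau>: "\<tau> \<in> {0..t}" for \<tau>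
  proof -
    have \<tau>': "\<tau> \<in> {0..tf}" using \<tau> t by auto
    have "\<bar>\<Sum>j\<in>UNIV. (mexp ((t - \<tau>) *\<^sub>R A) ** Bp) $ i $ j * \<delta> \<tau> $ j\<bar>
        \<le> (\<Sum>j\<in>UNIV. \<bar>(mexp ((t - \<tau>) *\<^sub>R A) ** Bp) $ i $ j * \<delta> \<tau> $ j\<bar>)" by (rule sum_abs)
    also have "\<dots> \<le> (\<Sum>j\<in>UNIV. C * \<delta> \<tau> $ j)"
    proof (rule sum_mono)
      fix j
      have "\<bar>(mexp ((t - \<tau>) *\<^sub>R A) ** Bp) $ i $ j\<bar> \<le> C"
        using component_le_norm_cart[of "(mexp ((t - \<tau>) *\<^sub>R A) ** Bp) $ i" j] Finite_Cartesian_Product.norm_nth_le[of "mexp ((t - \<tau>) *\<^sub>R A) ** Bp" i] C[OF \<tau>] by linarith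
      then show "\<bar>(mexp ((t - \<tau>) *\<^sub>R A) ** Bp) $ i $ j * \<delta> \<tau> $ j\<bar> \<le> C * \<delta> \<tau> $ j"
        using dn \<tau>' by (simp add: abs_mult mult_right_mono)
    qed
    also have "\<dots> = C" using ds \<tau>' by (simp add: sum_distrib_left[symmetric])
    finally show ?thesis .
  qed
  then show ?thesis by blast
qed

theorem theorem4:
  fixes A :: "real^'n^'n" and Bp :: "real^'m^'n" and Bd :: "real^'k^'n"
    and x0 :: "real^'n" and d :: "real \<Rightarrow> real^'k"
    and pmin pmax :: "real^'m" and xmin xmax :: "real^'n" and tf :: real
    and \<delta> :: "real \<Rightarrow> real^'m"
    and pplus_tot pminus_tot pa_tot :: "real \<Rightarrow> real"
  assumes tf: "0 \<le> tf"
    and A_diag: "\<forall>i. A $ i $ i \<le> 0"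
    and A_offdiag: "\<forall>i j. i \<noteq> j \<longrightarrow> 0 \<le> A $ i $ j"
    and Bp_nonneg: "\<forall>i j. 0 \<le> Bp $ i $ j"
    and d_int: "d absolutely_integrable_on {0..tf}"
    and pbounds: "\<forall>j. 0 \<le> pmin $ j \<and> pmin $ j \<le> pmax $ j"
    and xbounds: "\<forall>i. xmin $ i \<le> xmax $ i"
    and \<delta>_meas: "\<delta> measurable_on {0..tf}"
    and \<delta>_nonneg: "\<forall>t\<in>{0..tf}. \<forall>j. 0 \<le> \<delta> t $ j"
    and \<delta>_sum: "\<forall>t\<in>{0..tf}. (\<Sum>j\<in>UNIV. \<delta> t $ j) = 1"
    and gamma_pos: "\<forall>t\<in>{0..tf}. \<forall>i. 0 < gamma_plus A Bp \<delta> t i \<and> 0 < gamma_minus A Bp \<delta> t i"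
    and feas_plus: "feasible_tot A Bd Bp x0 d pmin pmax xmin xmax tf \<delta> pplus_tot"
    and feas_minus: "feasible_tot A Bd Bp x0 d pmin pmax xmin xmax tf \<delta> pminus_tot"
    and pa_int: "pa_tot integrable_on {0..tf}"
    and pa_nonneg: "\<forall>t\<in>{0..tf}. 0 \<le> pa_tot t"
    and pa_bounds: "\<forall>t\<in>{0..tf}. \<forall>j. pmin $ j \<le> dispatch \<delta> pa_tot t $ j \<and> dispatch \<delta> pa_tot t $ j \<le> pmax $ j"
    and pa_energy: "\<forall>t\<in>{0..tf}.
         E_down A Bp \<delta> (dispatch \<delta> pminus_tot) t \<le> integral {0..t} pa_tot \<and>
         integral {0..t} pa_tot \<le> E_up A Bp \<delta> (dispatch \<delta> pplus_tot) t"
  shows "\<forall>t\<in>{0..tf}. \<forall>i. xmin $ i \<le> state A Bd Bp x0 d (dispatch \<delta> pa_tot) t $ i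
                         \<and> state A Bd Bp x0 d (dispatch \<delta> pa_tot) t $ i \<le> xmax $ i"
proof (intro ballI allI)
  fix t i assume t: "t \<in> {0..tf}"
  have sub: "{0..t} \<subseteq> {0..tf}" using t by auto
  define g where "g \<tau> = (\<Sum>j\<in>UNIV. (mexp ((t - \<tau>) *\<^sub>R A) ** Bp) $ i $ j * \<delta> \<tau> $ j)" for \<tau>
  define C0 where "C0 = mexp (t *\<^sub>R A) *v x0
     + integral {0..t} (\<lambda>\<tau>. mexp ((t - \<tau>) *\<^sub>R A) *v (Bd *v d \<tau>))"
  have dt: "d absolutely_integrable_on {0..t}"
    by (rule absolutely_integrable_on_subinterval[OF d_int sub])
  have fp: "pplus_tot integrable_on {0..tf}" "\<forall>t\<in>{0..tf}. 0 \<le> pplus_tot t"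
    "\<forall>t\<in>{0..tf}. \<forall>i. xmin $ i \<le> state A Bd Bp x0 d (dispatch \<delta> pplus_tot) t $ i
                      \<and> state A Bd Bp x0 d (dispatch \<delta> pplus_tot) t $ i \<le> xmax $ i"
    using feas_plus unfolding feasible_tot_def by auto
  have fm: "pminus_tot integrable_on {0..tf}" "\<forall>t\<in>{0..tf}. 0 \<le> pminus_tot t"
    "\<forall>t\<in>{0..tf}. \<forall>i. xmin $ i \<le> state A Bd Bp x0 d (dispatch \<delta> pminus_tot) t $ i
                      \<and> state A Bd Bp x0 d (dispatch \<delta> pminus_tot) t $ i \<le> xmax $ i"
    using feas_minus unfolding feasible_tot_def by auto
  have Pp: "dispatch \<delta> pplus_tot absolutely_integrable_on {0..t}"
    by (rule disp_absint[OF \<delta>_meas \<delta>_nonneg \<delta>_sum fp(1,2) t])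
  have Pm: "dispatch \<delta> pminus_tot absolutely_integrable_on {0..t}"
    by (rule disp_absint[OF \<delta>_meas \<delta>_nonneg \<delta>_sum fm(1,2) t])
  have Pa: "dispatch \<delta> pa_tot absolutely_integrable_on {0..t}"
    by (rule disp_absint[OF \<delta>_meas \<delta>_nonneg \<delta>_sum pa_int pa_nonneg t])
  have "state A Bd Bp x0 d (dispatch \<delta> pplus_tot) t = C0 + forced A Bp (dispatch \<delta> pplus_tot) t"
    unfolding C0_def by (rule state_split[OF dt Pp])
  then have sp: "state A Bd Bp x0 d (dispatch \<delta> pplus_tot) t $ i = C0 $ i + forced A Bp (dispatch \<delta> pplus_tot) t $ i"
    by simp
  have "state A Bd Bp x0 d (dispatch \<delta> pminus_tot) t = C0 + forced A Bp (dispatch \<delta> pminus_tot) t"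
    unfolding C0_def by (rule state_split[OF dt Pm])
  then have sm: "state A Bd Bp x0 d (dispatch \<delta> pminus_tot) t $ i = C0 $ i + forced A Bp (dispatch \<delta> pminus_tot) t $ i"
    by simp
  have "state A Bd Bp x0 d (dispatch \<delta> pa_tot) t = C0 + forced A Bp (dispatch \<delta> pa_tot) t"
    unfolding C0_def by (rule state_split[OF dt Pa])
  then have sa: "state A Bd Bp x0 d (dispatch \<delta> pa_tot) t $ i = C0 $ i + forced A Bp (dispatch \<delta> pa_tot) t $ i"
    by simp
  have fa: "forced A Bp (dispatch \<delta> pa_tot) t $ i = integral {0..t} (\<lambda>\<tau>. pa_tot \<tau> * g \<tau>)"
    and ia: "(\<lambda>\<tau>. pa_tot \<tau> * g \<tau>) integrable_on {0..t}"
    using forced_comp[OF Pa, of A Bp i] by (simp_all add: g_def)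
  obtain C where C: "\<And>\<tau>. \<tau> \<in> {0..t} \<Longrightarrow> \<bar>g \<tau>\<bar> \<le> C"
    using g_bounded[OF \<delta>_nonneg \<delta>_sum t, of A Bp i] unfolding g_def by blast
  have bA: "bdd_above (g ` {0..t})" using C by (intro bdd_aboveI[of _ C]) (auto simp: abs_le_iff)
  have bB: "bdd_below (g ` {0..t})" using C by (intro bdd_belowI[of _ "- C"]) (force simp: abs_le_iff)
  have gp: "gamma_plus A Bp \<delta> t i = (SUP \<tau>\<in>{0..t}. g \<tau>)" by (simp add: gamma_plus_def g_def)
  have gm: "gamma_minus A Bp \<delta> t i = (INF \<tau>\<in>{0..t}. g \<tau>)" by (simp add: gamma_minus_def g_def)
  have gle: "g \<tau> \<le> gamma_plus A Bp \<delta> t i" if "\<tau> \<in> {0..t}" for \<tau>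
    unfolding gp by (rule cSUP_upper[OF that bA])
  have gge: "gamma_minus A Bp \<delta> t i \<le> g \<tau>" if "\<tau> \<in> {0..t}" for \<tau>
    unfolding gm by (rule cINF_lower[OF bB that])
  have pat: "pa_tot integrable_on {0..t}" by (rule integrable_on_subinterval[OF pa_int sub])
  have pan: "0 \<le> pa_tot \<tau>" if "\<tau> \<in> {0..t}" for \<tau> using pa_nonneg sub that by auto
  have gpp: "0 < gamma_plus A Bp \<delta> t i" and gmp: "0 < gamma_minus A Bp \<delta> t i" using gamma_pos t by auto
  have "forced A Bp (dispatch \<delta> pa_tot) t $ i \<le> integral {0..t} (\<lambda>\<tau>. pa_tot \<tau> * gamma_plus A Bp \<delta> t i)"
    unfolding fa
    by (rule integral_le[OF ia integrable_on_mult_left[OF pat]]) (simp add: gle pan mult_left_mono)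
  also have "\<dots> = integral {0..t} pa_tot * gamma_plus A Bp \<delta> t i" by simp
  also have "\<dots> \<le> E_up A Bp \<delta> (dispatch \<delta> pplus_tot) t * gamma_plus A Bp \<delta> t i"
    using pa_energy t gpp by (simp add: mult_right_mono)
  also have "\<dots> \<le> forced A Bp (dispatch \<delta> pplus_tot) t $ i"
  proof -
    have "E_up A Bp \<delta> (dispatch \<delta> pplus_tot) t \<le> forced A Bp (dispatch \<delta> pplus_tot) t $ i / gamma_plus A Bp \<delta> t i"
      unfolding E_up_def by (rule Min_le) auto
    then show ?thesis using gpp by (simp add: pos_le_divide_eq)
  qed
  finally have up: "forced A Bp (dispatch \<delta> pa_tot) t $ i \<le> forced A Bp (dispatch \<delta> pplus_tot) t $ i" .
  have "forced A Bp (dispatch \<delta> pminus_tot) t $ i \<le> E_down A Bp \<delta> (dispatch \<delta> pminus_tot) t * gamma_minus A Bp \<delta> t i"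
  proof -
    have "forced A Bp (dispatch \<delta> pminus_tot) t $ i / gamma_minus A Bp \<delta> t i \<le> E_down A Bp \<delta> (dispatch \<delta> pminus_tot) t"
      unfolding E_down_def by (rule Max_ge) auto
    then show ?thesis using gmp by (simp add: pos_divide_le_eq)
  qed
  also have "\<dots> \<le> integral {0..t} pa_tot * gamma_minus A Bp \<delta> t i"
    using pa_energy t gmp by (simp add: mult_right_mono)
  also have "\<dots> = integral {0..t} (\<lambda>\<tau>. pa_tot \<tau> * gamma_minus A Bp \<delta> t i)" by simp
  also have "\<dots> \<le> forced A Bp (dispatch \<delta> pa_tot) t $ i"
    unfolding fa
    by (rule integral_le[OF integrable_on_mult_left[OF pat] ia]) (simp add: gge pan mult_left_mono)
  finally have lo: "forced A Bp (dispatch \<delta> pminus_tot) t $ i \<le> forced A Bp (dispatch \<delta> pa_tot) t $ i" .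
  have "xmin $ i \<le> state A Bd Bp x0 d (dispatch \<delta> pminus_tot) t $ i"
    and "state A Bd Bp x0 d (dispatch \<delta> pplus_tot) t $ i \<le> xmax $ i"
    using fp(3) fm(3) t by auto
  then show "xmin $ i \<le> state A Bd Bp x0 d (dispatch \<delta> pa_tot) t $ i
          \<and> state A Bd Bp x0 d (dispatch \<delta> pa_tot) t $ i \<le> xmax $ i"
    using up lo sp sm sa by linarith
qed

end
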